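(* Let $\mathcal{X}=\{1,\ldots,n\}$, let $p$ be a probability vector on $\mathcal{X}$ with all entries positive (the prior of $X$), let $p_{[1]}=\max_x p(x)$, and let $k<n$ be a positive integer. Then the maximum of the posterior min-entropy $H_\infty(X\mid Y)=-\log\big(\sum_{y:\,p(y)>0}p(y)\max_{x\in\mathcal{X}}p(x\mid y)\big)$ over all feasible channels is $-\log(\max(1/k,p_{[1]}))$. Consequently the minimum over feasible channels of the min-entropy leakage $H_\infty(X)-H_\infty(X\mid Y)$, where $H_\infty(X)=-\log p_{[1]}$, equals $0$ if $k\geq 1/p_{[1]}$ and equals $-\log(k\,p_{[1]})$ if $k<1/p_{[1]}$.
   Context: A channel is a discrete output set $\mathcal{Y}$ with conditional probabilities $p(y\mid x)\geq0$, $\sum_y p(y\mid x)=1$; $Y$ is its output when the input is $X\sim p$, with $p(y)=\sum_x p(x)p(y\mid x)$ and $p(x\mid y)=p(x)p(y\mid x)/p(y)$. The pre-image of $y$ is $\{x:p(y\mid x)>0\}$; the channel is feasible if every pre-image has at most $k$ elements. *)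

theory Defs
  imports "HOL-Analysis.Analysis"
begin

text \<open>Inputs: X = {1..n}. Outputs: a discrete (countable) output set, represented by nat.
  A channel is W :: nat => nat => real with W x y = p(y|x).\<close>

definition is_channel :: "nat \<Rightarrow> (nat \<Rightarrow> nat \<Rightarrow> real) \<Rightarrow> bool" where
  "is_channel n W \<longleftrightarrow> (\<forall>x\<in>{1..n}. (\<forall>y. W x y \<ge> 0) \<and> ((\<lambda>y. W x y) has_sum 1) UNIV)"

definition preimage :: "nat \<Rightarrow> (nat \<Rightarrow> nat \<Rightarrow> real) \<Rightarrow> nat \<Rightarrow> nat set" where
  "preimage n W y = {x\<in>{1..n}. W x y > 0}"

definition feasible_channels :: "nat \<Rightarrow> nat \<Rightarrow> (nat \<Rightarrow> nat \<Rightarrow> real) set" where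
  "feasible_channels n k = {W. is_channel n W \<and> (\<forall>y. card (preimage n W y) \<le> k)}"

definition out_prob :: "nat \<Rightarrow> (nat \<Rightarrow> real) \<Rightarrow> (nat \<Rightarrow> nat \<Rightarrow> real) \<Rightarrow> nat \<Rightarrow> real" where
  "out_prob n p W y = (\<Sum>x\<in>{1..n}. p x * W x y)"

definition posterior :: "nat \<Rightarrow> (nat \<Rightarrow> real) \<Rightarrow> (nat \<Rightarrow> nat \<Rightarrow> real) \<Rightarrow> nat \<Rightarrow> nat \<Rightarrow> real" where
  "posterior n p W x y = p x * W x y / out_prob n p W y"

definition min_entropy :: "nat \<Rightarrow> (nat \<Rightarrow> real) \<Rightarrow> real" where
  "min_entropy n p = - log 2 (Max (p ` {1..n}))"

definition cond_min_entropy :: "nat \<Rightarrow> (nat \<Rightarrow> real) \<Rightarrow> (nat \<Rightarrow> nat \<Rightarrow> real) \<Rightarrow> real" where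
  "cond_min_entropy n p W =
     - log 2 (infsum (\<lambda>y. out_prob n p W y * Max ((\<lambda>x. posterior n p W x y) ` {1..n}))
                     {y. out_prob n p W y > 0})"

definition min_entropy_leakage :: "nat \<Rightarrow> (nat \<Rightarrow> real) \<Rightarrow> (nat \<Rightarrow> nat \<Rightarrow> real) \<Rightarrow> real" where
  "min_entropy_leakage n p W = min_entropy n p - cond_min_entropy n p W"

end

theory Submission imports Defs begin


lemma has_sum_finsum:
  fixes f :: "'i \<Rightarrow> 'a \<Rightarrow> real"
  assumes "finite I" "\<And>x. x\<in>I \<Longrightarrow> (f x has_sum s x) A"
  shows "((\<lambda>y. \<Sum>x\<in>I. f x y) has_sum (\<Sum>x\<in>I. s x)) A"
  using assms by (induction I rule: finite_induct) (auto intro: has_sum_add)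

definition cols_ok :: "nat set \<Rightarrow> nat \<Rightarrow> (nat \<Rightarrow> real) \<Rightarrow> real \<Rightarrow> (real \<times> (nat \<Rightarrow> real)) list \<Rightarrow> bool" where
 "cols_ok S k a C cs \<longleftrightarrow> (\<forall>hc\<in>set cs. (\<forall>x\<in>S. 0 \<le> snd hc x \<and> snd hc x \<le> fst hc) \<and> card {x\<in>S. 0 < snd hc x} \<le> k)
    \<and> (\<forall>x\<in>S. (\<Sum>hc\<leftarrow>cs. snd hc x) = a x) \<and> (\<Sum>hc\<leftarrow>cs. fst hc) \<le> C"

lemma decomp_aux:
  assumes finS: "finite S" and kpos: "0 < k"
  shows "\<forall>a C. card {x\<in>S. 0 < a x} + card {x\<in>S. 0 < a x \<and> a x < C} = m \<longrightarrow>
     (\<forall>x\<in>S. 0 \<le> a x \<and> a x \<le> C) \<longrightarrow> sum a S \<le> real k * C \<longrightarrow> 0 \<le> C \<longrightarrow> (\<exists>cs. cols_ok S k a C cs)"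
proof (induction m rule: less_induct)
  case (less m)
  show ?case
  proof (intro allI impI)
    fix a :: "nat \<Rightarrow> real" and C :: real
    assume m: "card {x\<in>S. 0 < a x} + card {x\<in>S. 0 < a x \<and> a x < C} = m"
      and bnd: "\<forall>x\<in>S. 0 \<le> a x \<and> a x \<le> C" and sm: "sum a S \<le> real k * C" and C0: "0 \<le> C"
    define P where "P = {x\<in>S. 0 < a x}"
    define PN where "PN = {x\<in>S. 0 < a x \<and> a x < C}"
    have finP: "finite P" "finite PN" using finS by (auto simp: P_def PN_def)
    show "\<exists>cs. cols_ok S k a C cs"
    proof (cases "card P \<le> k")
      case True
      have "cols_ok S k a C [(C, a)]" using True bnd unfolding cols_ok_def P_def by auto
      thus ?thesis by blast
    next
      case False
      then have "P \<noteq> {}" by auto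
      then obtain x1 where x1: "x1 \<in> P" by auto
      have Cpos: "0 < C" using x1 bnd by (auto simp: P_def)
      define T where "T = {x\<in>S. a x = C}"
      have TP: "T \<subseteq> P" using Cpos by (auto simp: T_def P_def)
      have finT: "finite T" using finS by (auto simp: T_def)
      have cardT: "card T \<le> k"
      proof (rule ccontr)
        assume "\<not> card T \<le> k"
        hence "real k + 1 \<le> real (card T)" by simp
        hence "(real k + 1) * C \<le> real (card T) * C" using Cpos by (intro mult_right_mono) auto
        also have "real (card T) * C = sum a T" by (simp add: T_def)
        also have "sum a T \<le> sum a S" using finS bnd by (intro sum_mono2) (auto simp: T_def)
        finally show False using sm Cpos by (simp add: algebra_simps)
      qed
      have "k - card T \<le> card (P - T)" using False TP finP cardT by (simp add: card_Diff_subset finT)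
      then obtain U where U: "U \<subseteq> P - T" "card U = k - card T" "finite U"
        by (rule obtain_subset_with_card_n)
      define K where "K = T \<union> U"
      have KP: "K \<subseteq> P" using U TP by (auto simp: K_def)
      have TK: "T \<subseteq> K" by (auto simp: K_def)
      have cardK: "card K = k" unfolding K_def using U finT cardT
        by (subst card_Un_disjoint) auto
      have finK: "finite K" using KP finP finite_subset by blast
      have KS: "K \<subseteq> S" using KP by (auto simp: P_def)
      have Kne: "K \<noteq> {}" using cardK kpos by auto
      define t1 where "t1 = Min (a ` K)"
      have t1le: "\<And>x. x \<in> K \<Longrightarrow> t1 \<le> a x" unfolding t1_def using finK by auto
      have "t1 \<in> a ` K" unfolding t1_def using Min_in[of "a ` K"] finK Kne by blast
      then obtain x0 where x0: "x0 \<in> K" "a x0 = t1" by auto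
      have t1pos: "0 < t1" using x0 KP by (auto simp: P_def)
      have t1C: "t1 \<le> C" using x0 KS bnd by auto
      have "card K < card P" using False cardK by simp
      hence "P - K \<noteq> {}" using KP by auto
      hence SKne: "S - K \<noteq> {}" by (auto simp: P_def)
      have finSK: "finite (S - K)" using finS by auto
      define t2 where "t2 = Min ((\<lambda>x. C - a x) ` (S - K))"
      have t2le: "\<And>x. x \<in> S - K \<Longrightarrow> t2 \<le> C - a x" unfolding t2_def using finSK by auto
      have "t2 \<in> (\<lambda>x. C - a x) ` (S - K)" unfolding t2_def using Min_in[of "(\<lambda>x. C - a x) ` (S - K)"] finSK SKne by blast
      then obtain z where z: "z \<in> S - K" "C - a z = t2" by auto
      have ltC: "\<And>x. x \<in> S - K \<Longrightarrow> a x < C"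
      proof -
        fix x assume x: "x \<in> S - K"
        have "a x \<noteq> C" using x TK by (auto simp: T_def)
        thus "a x < C" using x bnd by force
      qed
      have t2pos: "0 < t2" using z ltC by force
      define t where "t = min t1 t2"
      have tpos: "0 < t" using t1pos t2pos by (simp add: t_def)
      define a' where "a' = (\<lambda>x. if x \<in> K then a x - t else a x)"
      define C' where "C' = C - t"
      have bnd': "\<forall>x\<in>S. 0 \<le> a' x \<and> a' x \<le> C'"
      proof
        fix x assume x: "x \<in> S"
        show "0 \<le> a' x \<and> a' x \<le> C'"
        proof (cases "x \<in> K")
          case True
          then show ?thesis using t1le[OF True] bnd x by (auto simp: a'_def C'_def t_def)
        next
          case False
          then show ?thesis using t2le[of x] bnd x by (auto simp: a'_def C'_def t_def)
        qed
      qed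
      have "sum a' S = sum (\<lambda>x. a x - (if x \<in> K then t else 0)) S"
        by (rule sum.cong) (auto simp: a'_def)
      also have "\<dots> = sum a S - sum (\<lambda>x. if x \<in> K then t else 0) S" by (simp add: sum_subtractf)
      also have "sum (\<lambda>x. if x \<in> K then t else 0) S = sum (\<lambda>_. t) (S \<inter> K)"
        using finS sum.inter_restrict[of S "\<lambda>_. t" K] by simp
      also have "S \<inter> K = K" using KS by auto
      finally have "sum a' S = sum a S - real k * t" using cardK by simp
      hence sm': "sum a' S \<le> real k * C'" using sm by (simp add: C'_def algebra_simps)
      have C'0: "0 \<le> C'" using t1C by (simp add: C'_def t_def)
      define P' where "P' = {x\<in>S. 0 < a' x}"
      define PN' where "PN' = {x\<in>S. 0 < a' x \<and> a' x < C'}"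
      have P'P: "P' \<subseteq> P" using tpos by (auto simp: P'_def P_def a'_def split: if_splits)
      have PN'PN: "PN' \<subseteq> PN" using tpos by (auto simp: PN'_def PN_def a'_def C'_def split: if_splits)
      have lt: "card P' + card PN' < card P + card PN"
      proof (cases "t1 \<le> t2")
        case True
        hence "a' x0 = 0" using x0 by (simp add: a'_def t_def)
        hence "x0 \<notin> P'" by (simp add: P'_def)
        moreover have "x0 \<in> P" using x0 KP by auto
        ultimately have "P' \<subset> P" using P'P by auto
        hence "card P' < card P" using finP psubset_card_mono by blast
        moreover have "card PN' \<le> card PN" using PN'PN finP card_mono by blast
        ultimately show ?thesis by simp
      next
        case False
        hence tt: "t = t2" by (simp add: t_def)
        have "a' z = C'" using z tt by (simp add: a'_def C'_def)
        hence "z \<notin> PN'" by (simp add: PN'_def)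
        moreover have "z \<in> PN" using z False t1C t2pos by (auto simp: PN_def)
        ultimately have "PN' \<subset> PN" using PN'PN by auto
        hence "card PN' < card PN" using finP psubset_card_mono by blast
        moreover have "card P' \<le> card P" using P'P finP card_mono by blast
        ultimately show ?thesis by simp
      qed
      obtain cs' where cs': "cols_ok S k a' C' cs'"
        using less.IH[of "card P' + card PN'"] lt m bnd' sm' C'0
        unfolding P_def PN_def P'_def PN'_def by blast
      define col where "col = (\<lambda>x. if x \<in> K then t else (0::real))"
      have "{x\<in>S. 0 < col x} = K" using KS tpos by (auto simp: col_def)
      hence "cols_ok S k a C ((t, col) # cs')"
        using cs' tpos cardK unfolding cols_ok_def
        by (auto simp: col_def a'_def C'_def)
      thus ?thesis by blast
    qed
  qed
qed


lemma V_facts: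
  fixes n :: nat and p :: "nat \<Rightarrow> real" and W :: "nat \<Rightarrow> nat \<Rightarrow> real"
  assumes pos: "\<forall>x\<in>{1..n}. p x > 0" and prob: "(\<Sum>x\<in>{1..n}. p x) = 1"
    and ch: "is_channel n W" and n1: "1 \<le> n"
  defines "g \<equiv> \<lambda>y. Max ((\<lambda>x. p x * W x y) ` {1..n})"
  shows "infsum (\<lambda>y. out_prob n p W y * Max ((\<lambda>x. posterior n p W x y) ` {1..n})) {y. out_prob n p W y > 0} = infsum g UNIV"
    and "(out_prob n p W has_sum 1) UNIV"
    and "\<And>y x. x \<in> {1..n} \<Longrightarrow> p x * W x y \<le> g y"
    and "\<And>y. g y \<le> out_prob n p W y"
    and "\<And>y. 0 \<le> g y"
    and "g summable_on UNIV"
proof -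
  have Wnn: "\<And>x y. x \<in> {1..n} \<Longrightarrow> 0 \<le> W x y" using ch by (auto simp: is_channel_def)
  have hs: "\<And>x. x \<in> {1..n} \<Longrightarrow> ((\<lambda>y. W x y) has_sum 1) UNIV" using ch by (auto simp: is_channel_def)
  have ne: "{1..n} \<noteq> {}" using n1 by auto
  have tnn: "\<And>x y. x \<in> {1..n} \<Longrightarrow> 0 \<le> p x * W x y" using Wnn pos by (simp add: less_imp_le)
  show le: "\<And>y x. x \<in> {1..n} \<Longrightarrow> p x * W x y \<le> g y" unfolding g_def by (rule Max_ge) auto
  show g0: "\<And>y. 0 \<le> g y" using le[of 1] tnn[of 1] n1 by (meson atLeastAtMost_iff order.trans order_refl)
  show gle: "\<And>y. g y \<le> out_prob n p W y"
    unfolding g_def out_prob_def using ne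
    by (subst Max_le_iff) (auto intro!: member_le_sum tnn)
  have "((\<lambda>y. \<Sum>x\<in>{1..n}. p x * W x y) has_sum (\<Sum>x\<in>{1..n}. p x * 1)) UNIV"
    using has_sum_cmult_right[OF hs] by (intro has_sum_finsum) auto
  thus ophs: "(out_prob n p W has_sum 1) UNIV" using prob by (simp add: out_prob_def[abs_def])
  show "g summable_on UNIV"
    using has_sum_imp_summable[OF ophs] gle g0 by (rule summable_on_comparison_test)
  have "infsum (\<lambda>y. out_prob n p W y * Max ((\<lambda>x. posterior n p W x y) ` {1..n})) {y. out_prob n p W y > 0}
      = infsum g {y. out_prob n p W y > 0}"
  proof (rule infsum_cong)
    fix y assume y: "y \<in> {y. out_prob n p W y > 0}"
    have "Max ((\<lambda>x. posterior n p W x y) ` {1..n}) = Max ((\<lambda>u. u / out_prob n p W y) ` ((\<lambda>x. p x * W x y) ` {1..n}))"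
      by (simp add: posterior_def image_image)
    also have "\<dots> = g y / out_prob n p W y" unfolding g_def
      using y ne by (subst mono_Max_commute[symmetric]) (auto intro!: monoI divide_right_mono)
    finally show "out_prob n p W y * Max ((\<lambda>x. posterior n p W x y) ` {1..n}) = g y" using y by simp
  qed
  also have "\<dots> = infsum g UNIV"
  proof (rule infsum_cong_neutral)
    fix y assume "y \<in> UNIV - {y. out_prob n p W y > 0}"
    hence "out_prob n p W y \<le> 0" by auto
    thus "g y = 0" using gle[of y] g0[of y] by linarith
  qed auto
  finally show "infsum (\<lambda>y. out_prob n p W y * Max ((\<lambda>x. posterior n p W x y) ` {1..n})) {y. out_prob n p W y > 0} = infsum g UNIV" .
qed


lemma lower_bound:
  fixes n k :: nat and p :: "nat \<Rightarrow> real" and W :: "nat \<Rightarrow> nat \<Rightarrow> real"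
  assumes pos: "\<forall>x\<in>{1..n}. p x > 0" and prob: "(\<Sum>x\<in>{1..n}. p x) = 1"
    and W: "W \<in> feasible_channels n k" and n1: "1 \<le> n" and kpos: "0 < k"
  shows "max (1 / real k) (Max (p ` {1..n})) \<le>
     infsum (\<lambda>y. out_prob n p W y * Max ((\<lambda>x. posterior n p W x y) ` {1..n})) {y. out_prob n p W y > 0}"
proof -
  define g where "g = (\<lambda>y. Max ((\<lambda>x. p x * W x y) ` {1..n}))"
  have ch: "is_channel n W" and cardle: "\<And>y. card (preimage n W y) \<le> k"
    using W by (auto simp: feasible_channels_def)
  note F = V_facts[OF pos prob ch n1, folded g_def]
  have Wnn: "\<And>x y. x \<in> {1..n} \<Longrightarrow> 0 \<le> W x y" using ch by (auto simp: is_channel_def)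
  have hs: "\<And>x. x \<in> {1..n} \<Longrightarrow> ((\<lambda>y. W x y) has_sum 1) UNIV" using ch by (auto simp: is_channel_def)
  have ne: "{1..n} \<noteq> {}" using n1 by auto
  have "Max (p ` {1..n}) \<in> p ` {1..n}" using ne by (intro Max_in) auto
  then obtain x0 where x0: "x0 \<in> {1..n}" "p x0 = Max (p ` {1..n})" by auto
  have h0: "((\<lambda>y. p x0 * W x0 y) has_sum p x0) UNIV" using has_sum_cmult_right[OF hs[OF x0(1)], of "p x0"] by simp
  have "\<And>y. p x0 * W x0 y \<le> g y" using F(3)[OF x0(1)] by (simp add: g_def)
  hence "p x0 \<le> infsum g UNIV"
    using has_sum_mono[OF h0 has_sum_infsum[OF F(6)]] by blast
  moreover
  have h1: "((\<lambda>y. inverse (real k) * out_prob n p W y) has_sum (inverse (real k) * 1)) UNIV"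
    by (rule has_sum_cmult_right[OF F(2)])
  have "\<And>y. inverse (real k) * out_prob n p W y \<le> g y"
  proof -
    fix y
    have "out_prob n p W y = (\<Sum>x\<in>preimage n W y. p x * W x y)"
      unfolding out_prob_def preimage_def
    proof (rule sum.mono_neutral_right)
      show "\<forall>i\<in>{1..n} - {x \<in> {1..n}. 0 < W x y}. p i * W i y = 0"
        using Wnn by (metis (no_types, lifting) DiffE antisym mem_Collect_eq mult_zero_right not_le)
    qed auto
    also have "\<dots> \<le> (\<Sum>x\<in>preimage n W y. g y)"
      by (rule sum_mono) (auto simp: preimage_def g_def intro: F(3))
    also have "\<dots> = real (card (preimage n W y)) * g y" by simp
    also have "\<dots> \<le> real k * g y" using cardle[of y] F(5)[of y] by (intro mult_right_mono) (auto simp: g_def)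
    finally show "inverse (real k) * out_prob n p W y \<le> g y" using kpos
      by (simp add: field_simps)
  qed
  hence "inverse (real k) * 1 \<le> infsum g UNIV"
    using has_sum_mono[OF h1 has_sum_infsum[OF F(6)]] by blast
  ultimately show ?thesis using F(1) x0 by (simp add: divide_inverse)
qed


lemma sum_list_map_nth: "sum_list (map f xs) = (\<Sum>i<length xs. f (xs ! i))"
  by (simp add: sum_list_sum_nth atLeast0LessThan)

theorem corollary1:
  fixes n k :: nat and p :: "nat \<Rightarrow> real"
  assumes pos: "\<forall>x\<in>{1..n}. p x > 0"
    and prob: "(\<Sum>x\<in>{1..n}. p x) = 1"
    and k_pos: "0 < k" and k_lt: "k < n"
  shows "(\<exists>W\<in>feasible_channels n k.
             cond_min_entropy n p W = - log 2 (max (1 / real k) (Max (p ` {1..n}))))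
       \<and> (\<forall>W\<in>feasible_channels n k.
             cond_min_entropy n p W \<le> - log 2 (max (1 / real k) (Max (p ` {1..n}))))
       \<and> (\<exists>W\<in>feasible_channels n k.
             min_entropy_leakage n p W = (if real k \<ge> 1 / Max (p ` {1..n}) then 0
                                         else - log 2 (real k * Max (p ` {1..n}))))
       \<and> (\<forall>W\<in>feasible_channels n k.
             min_entropy_leakage n p W \<ge> (if real k \<ge> 1 / Max (p ` {1..n}) then 0
                                         else - log 2 (real k * Max (p ` {1..n}))))"
proof -
  define I where "I = {1..n}"
  define M where "M = Max (p ` {1..n})"
  define C where "C = max (1 / real k) M"
  define V where "V = (\<lambda>W. infsum (\<lambda>y. out_prob n p W y * Max ((\<lambda>x. posterior n p W x y) ` {1..n})) {y. out_prob n p W y > 0})"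
  have n1: "1 \<le> n" using k_pos k_lt by simp
  have ne: "{1..n} \<noteq> {}" using n1 by auto
  have pleM: "\<And>x. x \<in> {1..n} \<Longrightarrow> p x \<le> M" unfolding M_def by (rule Max_ge) auto
  have Mpos: "0 < M" using pleM[of 1] pos n1 by force
  have Cpos: "0 < C" using Mpos by (simp add: C_def)
  have lowV: "\<And>W. W \<in> feasible_channels n k \<Longrightarrow> C \<le> V W"
    unfolding C_def M_def V_def using lower_bound[OF pos prob _ n1 k_pos] by blast
  have cme: "\<And>W. cond_min_entropy n p W = - log 2 (V W)" by (simp add: cond_min_entropy_def V_def)
  have mel: "\<And>W. min_entropy_leakage n p W = log 2 (V W) - log 2 M"
    by (simp add: min_entropy_leakage_def min_entropy_def cme M_def)
  have "\<exists>cs. cols_ok {1..n} k p C cs"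
  proof (rule decomp_aux[OF finite_atLeastAtMost k_pos, rule_format, OF refl])
    show "\<And>x. x \<in> {1..n} \<Longrightarrow> 0 \<le> p x \<and> p x \<le> C" using pos pleM by (force simp: C_def less_imp_le max.coboundedI2)
    have "real k * (1 / real k) \<le> real k * C" using k_pos by (intro mult_left_mono) (auto simp: C_def)
    thus "sum p {1..n} \<le> real k * C" using prob k_pos by simp
    show "0 \<le> C" using Cpos by simp
  qed
  then obtain cs where cs: "cols_ok {1..n} k p C cs" by blast
  define W0 where "W0 = (\<lambda>x y. if y < length cs then snd (cs ! y) x / p x else 0)"
  have colnn: "\<And>y x. y < length cs \<Longrightarrow> x \<in> {1..n} \<Longrightarrow> 0 \<le> snd (cs ! y) x \<and> snd (cs ! y) x \<le> fst (cs ! y)"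
    using cs nth_mem unfolding cols_ok_def by blast
  have colcard: "\<And>y. y < length cs \<Longrightarrow> card {x\<in>{1..n}. 0 < snd (cs ! y) x} \<le> k"
    using cs nth_mem unfolding cols_ok_def by blast
  have colsum: "\<And>x. x \<in> {1..n} \<Longrightarrow> (\<Sum>y<length cs. snd (cs ! y) x) = p x"
    using cs unfolding cols_ok_def by (simp add: sum_list_map_nth)
  have hsum: "(\<Sum>y<length cs. fst (cs ! y)) \<le> C"
    using cs unfolding cols_ok_def by (simp add: sum_list_map_nth)
  have chW0: "is_channel n W0" unfolding is_channel_def
  proof (intro ballI conjI allI)
    fix x y assume x: "x \<in> {1..n}"
    show "0 \<le> W0 x y" using colnn[OF _ x] pos x by (auto simp: W0_def less_imp_le)
    have "(\<Sum>y<length cs. W0 x y) = (\<Sum>y<length cs. snd (cs ! y) x) / p x"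
      by (simp add: W0_def sum_divide_distrib)
    also have "\<dots> = 1" using colsum[OF x] pos x by force
    finally show "((\<lambda>y. W0 x y) has_sum 1) UNIV"
      by (intro has_sum_finite_neutralI[of "{..<length cs}"]) (auto simp: W0_def)
  qed
  have "\<And>y. card (preimage n W0 y) \<le> k"
  proof -
    fix y
    show "card (preimage n W0 y) \<le> k"
    proof (cases "y < length cs")
      case True
      have "preimage n W0 y = {x\<in>{1..n}. 0 < snd (cs ! y) x}"
        using True pos by (force simp: preimage_def W0_def zero_less_divide_iff)
      thus ?thesis using colcard[OF True] by simp
    next
      case False
      thus ?thesis by (simp add: preimage_def W0_def)
    qed
  qed
  hence W0f: "W0 \<in> feasible_channels n k" using chW0 by (simp add: feasible_channels_def)
  define g where "g = (\<lambda>y. Max ((\<lambda>x. p x * W0 x y) ` {1..n}))"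
  note F = V_facts[OF pos prob chW0 n1, folded g_def]
  have gz: "\<And>y. y \<notin> {..<length cs} \<Longrightarrow> g y = 0"
  proof -
    fix y assume "y \<notin> {..<length cs}"
    hence "(\<lambda>x. p x * W0 x y) ` {1..n} = {0}" using ne by (auto simp: W0_def)
    thus "g y = 0" by (simp add: g_def)
  qed
  have gle: "\<And>y. y < length cs \<Longrightarrow> g y \<le> fst (cs ! y)"
  proof -
    fix y assume y: "y < length cs"
    have "\<And>x. x \<in> {1..n} \<Longrightarrow> p x * W0 x y = snd (cs ! y) x" using y pos by (force simp: W0_def)
    thus "g y \<le> fst (cs ! y)" unfolding g_def using ne colnn[OF y]
      by (subst Max_le_iff) auto
  qed
  have "(g has_sum (\<Sum>y<length cs. g y)) UNIV"
    by (rule has_sum_finite_neutralI[of "{..<length cs}"]) (use gz in auto)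
  hence "V W0 = (\<Sum>y<length cs. g y)" using F(1) unfolding V_def g_def by (simp add: infsumI)
  also have "\<dots> \<le> (\<Sum>y<length cs. fst (cs ! y))" by (rule sum_mono) (simp add: gle)
  finally have "V W0 \<le> C" using hsum by simp
  hence VW0: "V W0 = C" using lowV[OF W0f] by simp
  have R: "log 2 C - log 2 M = (if real k \<ge> 1 / M then 0 else - log 2 (real k * M))"
  proof (cases "real k \<ge> 1 / M")
    case True
    hence "1 / real k \<le> M" using Mpos k_pos by (simp add: field_simps)
    thus ?thesis using True by (simp add: C_def)
  next
    case False
    hence "M < 1 / real k" using Mpos k_pos by (simp add: field_simps)
    hence "C = 1 / real k" by (simp add: C_def)
    thus ?thesis using False Mpos k_pos by (simp add: log_mult log_divide)
  qed
  have logle: "\<And>W. W \<in> feasible_channels n k \<Longrightarrow> log 2 C \<le> log 2 (V W)"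
  proof -
    fix W assume "W \<in> feasible_channels n k"
    hence "C \<le> V W" by (rule lowV)
    thus "log 2 C \<le> log 2 (V W)" using Cpos by simp
  qed
  show ?thesis
    unfolding M_def[symmetric] C_def[symmetric]
  proof (intro conjI)
    show "\<exists>W\<in>feasible_channels n k. cond_min_entropy n p W = - log 2 C"
      using W0f VW0 cme by blast
    show "\<forall>W\<in>feasible_channels n k. cond_min_entropy n p W \<le> - log 2 C"
      using logle cme by simp
    show "\<exists>W\<in>feasible_channels n k. min_entropy_leakage n p W = (if real k \<ge> 1 / M then 0 else - log 2 (real k * M))"
    proof
      show "min_entropy_leakage n p W0 = (if real k \<ge> 1 / M then 0 else - log 2 (real k * M))"
        using mel[of W0] VW0 R by simp
    qed (rule W0f)
    show "\<forall>W\<in>feasible_channels n k. min_entropy_leakage n p W \<ge> (if real k \<ge> 1 / M then 0 else - log 2 (real k * M))"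
    proof
      fix W assume W: "W \<in> feasible_channels n k"
      have "log 2 C - log 2 M \<le> min_entropy_leakage n p W" using logle[OF W] mel[of W] by simp
      thus "min_entropy_leakage n p W \<ge> (if real k \<ge> 1 / M then 0 else - log 2 (real k * M))"
        using R by simp
    qed
  qed
qed

end
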